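(* Let $(V,o)$ be a normal surface singularity with $p_f(V,o)>0$, and let $\pi\colon X\to V$ be the minimal resolution. Assume that the fundamental cycle $Z$ is essentially irreducible, let $A$ be the unique irreducible component of $Z$ that is not a $(-2)$-curve, and assume $K_X\cdot A+Z^2\ge0$ and $D_m=Z_{min}$, where $D_m$ is the smallest term of the Yau sequence for $Z$. Then the canonical cycle is $$Z_K=\Big(\frac{2-2p_f(V,o)}{Z^2}+1\Big)Y,$$ where $Y$ is the Yau cycle.
   Context: Let $\pi^{-1}(o)=\bigcup_{i=1}^nE_i$ be the irreducible components of the exceptional set. A cycle is $D=\sum d_iE_i$, $d_i\in\mathbb Z$; $D_1\le D_2$ is coefficientwise, $D_1<D_2$ means $D_1\le D_2$, $D_1\neq D_2$. $K_X$ is the canonical divisor of $X$; for a cycle $D>0$, $p_a(D)=1+\frac12(D^2+D\cdot K_X)$. The fundamental cycle $Z$ is the smallest cycle $D>0$ with support $\pi^{-1}(o)$ and $D\cdot E_i\le0$ for all $i$; $p_f(V,o)=p_a(Z)$. "$\mathcal O_D(-C)$ numerically trivial" means $C\cdot E=0$ for every component $E\le D$. $Z_{min}$ is the unique minimal cycle $0<Z_{min}\le Z$ with $p_a(Z_{min})=p_a(Z)$. Yau sequence: for a cycle $D$ that is the fundamental cycle on its support with $Z_{min}\le D$, $p_a(D)=p_f(V,o)$ and $D\cdot E=0$ for all components $E\le Z_{min}$, its Tyurina component is the unique maximal cycle $0<D'<D$ with $\mathcal O_{D'}(-D)$ numerically trivial and $p_a(D')=p_a(D)$. Set $D_1=Z$,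 $D_{i+1}=$ Tyurina component of $D_i$ as long as $D_i\cdot E=0$ for all components $E\le Z_{min}$, stopping at the first $D_m$ with $D_m\cdot Z_{min}<0$; $Y=\sum_{i=1}^mD_i$ is the Yau cycle. A $(-2)$-curve is a smooth rational exceptional curve $E$ with $E^2=-2$. $Z$ is essentially irreducible if there is a component $A\le Z$ which is not a $(-2)$-curve such that, with $k$ the coefficient of $A$ in $Z$, either $Z=kA$ or all components of $Z-kA$ are $(-2)$-curves. The canonical cycle $Z_K$ is the cycle with rational coefficients supported on $\pi^{-1}(o)$ with $Z_K\cdot E_i=-K_X\cdot E_i$ for all $i$. *)

theory Defs
  imports Main "HOL.Real"
begin

text \<open>Numerical model of the exceptional set of a resolution of a normal surface
singularity.  Components are indexed by a finite type 'e.  M i j = E_i . E_j is the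
intersection matrix; g i is the arithmetic genus p_a(E_i) of the irreducible curve E_i.
By adjunction K_X . E_i = -E_i^2 + 2 p_a(E_i) - 2.  A cycle is a function 'e => int.\<close>

type_synonym 'e cycle = "'e \<Rightarrow> int"

definition KE :: "('e \<Rightarrow> 'e \<Rightarrow> int) \<Rightarrow> ('e \<Rightarrow> int) \<Rightarrow> 'e \<Rightarrow> int" where
  "KE M g i = - M i i + 2 * g i - 2"

definition inter :: "('e::finite \<Rightarrow> 'e \<Rightarrow> int) \<Rightarrow> 'e cycle \<Rightarrow> 'e cycle \<Rightarrow> int" where
  "inter M D C = (\<Sum>i\<in>UNIV. \<Sum>j\<in>UNIV. D i * M i j * C j)"

definition interE :: "('e::finite \<Rightarrow> 'e \<Rightarrow> int) \<Rightarrow> 'e cycle \<Rightarrow> 'e \<Rightarrow> int" where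
  "interE M D i = (\<Sum>j\<in>UNIV. D j * M j i)"

definition Kdot :: "('e::finite \<Rightarrow> 'e \<Rightarrow> int) \<Rightarrow> ('e \<Rightarrow> int) \<Rightarrow> 'e cycle \<Rightarrow> int" where
  "Kdot M g D = (\<Sum>i\<in>UNIV. D i * KE M g i)"

definition resolution_data :: "('e::finite \<Rightarrow> 'e \<Rightarrow> int) \<Rightarrow> ('e \<Rightarrow> int) \<Rightarrow> bool" where
  "resolution_data M g \<longleftrightarrow>
     (\<forall>i j. M i j = M j i) \<and>
     (\<forall>i j. i \<noteq> j \<longrightarrow> M i j \<ge> 0) \<and>
     (\<forall>x::'e \<Rightarrow> real. x \<noteq> (\<lambda>_. 0) \<longrightarrow>
        (\<Sum>i\<in>UNIV. \<Sum>j\<in>UNIV. x i * real_of_int (M i j) * x j) < 0) \<and>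
     {(i, j). i \<noteq> j \<and> M i j > 0}\<^sup>* = UNIV \<and>
     (\<forall>i. g i \<ge> 0)"

text \<open>Minimal resolution: no (-1)-curve, i.e. no smooth rational component with E^2=-1.
(An irreducible curve with p_a = 0 is smooth rational.)\<close>
definition minimal_resolution :: "('e \<Rightarrow> 'e \<Rightarrow> int) \<Rightarrow> ('e \<Rightarrow> int) \<Rightarrow> bool" where
  "minimal_resolution M g \<longleftrightarrow> (\<forall>i. \<not> (g i = 0 \<and> M i i = -1))"

definition minus2_curve :: "('e \<Rightarrow> 'e \<Rightarrow> int) \<Rightarrow> ('e \<Rightarrow> int) \<Rightarrow> 'e \<Rightarrow> bool" where
  "minus2_curve M g i \<longleftrightarrow> g i = 0 \<and> M i i = -2"

definition pos_cycle :: "'e cycle \<Rightarrow> bool" where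
  "pos_cycle D \<longleftrightarrow> (\<forall>i. D i \<ge> 0) \<and> D \<noteq> (\<lambda>_. 0)"

definition supp :: "'e cycle \<Rightarrow> 'e set" where
  "supp D = {i. D i \<noteq> 0}"

definition pa :: "('e::finite \<Rightarrow> 'e \<Rightarrow> int) \<Rightarrow> ('e \<Rightarrow> int) \<Rightarrow> 'e cycle \<Rightarrow> real" where
  "pa M g D = 1 + (real_of_int (inter M D D) + real_of_int (Kdot M g D)) / 2"

definition fund_cond :: "('e::finite \<Rightarrow> 'e \<Rightarrow> int) \<Rightarrow> 'e set \<Rightarrow> 'e cycle \<Rightarrow> bool" where
  "fund_cond M S D \<longleftrightarrow> pos_cycle D \<and> supp D = S \<and> (\<forall>i\<in>S. interE M D i \<le> 0)"

definition fund_cycle_on :: "('e::finite \<Rightarrow> 'e \<Rightarrow> int) \<Rightarrow> 'e set \<Rightarrow> 'e cycle" where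
  "fund_cycle_on M S = (THE D. fund_cond M S D \<and> (\<forall>D'. fund_cond M S D' \<longrightarrow> D \<le> D'))"

definition fund_cycle :: "('e::finite \<Rightarrow> 'e \<Rightarrow> int) \<Rightarrow> 'e cycle" where
  "fund_cycle M = fund_cycle_on M UNIV"

definition pf :: "('e::finite \<Rightarrow> 'e \<Rightarrow> int) \<Rightarrow> ('e \<Rightarrow> int) \<Rightarrow> real" where
  "pf M g = pa M g (fund_cycle M)"

definition zmin_cond :: "('e::finite \<Rightarrow> 'e \<Rightarrow> int) \<Rightarrow> ('e \<Rightarrow> int) \<Rightarrow> 'e cycle \<Rightarrow> bool" where
  "zmin_cond M g D \<longleftrightarrow> pos_cycle D \<and> D \<le> fund_cycle M \<and> pa M g D = pa M g (fund_cycle M)"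

definition Zmin :: "('e::finite \<Rightarrow> 'e \<Rightarrow> int) \<Rightarrow> ('e \<Rightarrow> int) \<Rightarrow> 'e cycle" where
  "Zmin M g = (THE D. zmin_cond M g D \<and> (\<forall>D'. zmin_cond M g D' \<and> D' \<le> D \<longrightarrow> D' = D))"

text \<open>Tyurina component of D: unique maximal cycle 0 < D' < D with O_{D'}(-D) numerically
trivial (D.E = 0 for every component E \<le> D') and p_a(D') = p_a(D).\<close>
definition tyurina_cond :: "('e::finite \<Rightarrow> 'e \<Rightarrow> int) \<Rightarrow> ('e \<Rightarrow> int) \<Rightarrow> 'e cycle \<Rightarrow> 'e cycle \<Rightarrow> bool" where
  "tyurina_cond M g D D' \<longleftrightarrow> pos_cycle D' \<and> D' < D \<and>
     (\<forall>i. D' i > 0 \<longrightarrow> interE M D i = 0) \<and> pa M g D' = pa M g D"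

definition tyurina :: "('e::finite \<Rightarrow> 'e \<Rightarrow> int) \<Rightarrow> ('e \<Rightarrow> int) \<Rightarrow> 'e cycle \<Rightarrow> 'e cycle" where
  "tyurina M g D = (THE D'. tyurina_cond M g D D' \<and>
       (\<forall>D''. tyurina_cond M g D D'' \<and> D' \<le> D'' \<longrightarrow> D'' = D'))"

text \<open>Yau sequence, 0-indexed: yau_seq M g k = D_{k+1}.  D_1 = Z and
D_{k+1} = Tyurina component of D_k as long as D_k.E = 0 for all components E \<le> Z_min.\<close>
fun yau_seq :: "('e::finite \<Rightarrow> 'e \<Rightarrow> int) \<Rightarrow> ('e \<Rightarrow> int) \<Rightarrow> nat \<Rightarrow> 'e cycle" where
  "yau_seq M g 0 = fund_cycle M"
| "yau_seq M g (Suc k) =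
     (if (\<forall>i. Zmin M g i > 0 \<longrightarrow> interE M (yau_seq M g k) i = 0)
      then tyurina M g (yau_seq M g k) else yau_seq M g k)"

text \<open>m is the (0-indexed) position of the last term D_m: the first k with D_k.Z_min < 0.\<close>
definition yau_last :: "('e::finite \<Rightarrow> 'e \<Rightarrow> int) \<Rightarrow> ('e \<Rightarrow> int) \<Rightarrow> nat \<Rightarrow> bool" where
  "yau_last M g m \<longleftrightarrow> inter M (yau_seq M g m) (Zmin M g) < 0 \<and>
     (\<forall>k<m. \<not> inter M (yau_seq M g k) (Zmin M g) < 0)"

definition yau_cycle :: "('e::finite \<Rightarrow> 'e \<Rightarrow> int) \<Rightarrow> ('e \<Rightarrow> int) \<Rightarrow> nat \<Rightarrow> 'e cycle" where
  "yau_cycle M g m = (\<lambda>i. \<Sum>k\<le>m. yau_seq M g k i)"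

definition essentially_irreducible :: "('e \<Rightarrow> 'e \<Rightarrow> int) \<Rightarrow> ('e \<Rightarrow> int) \<Rightarrow> 'e cycle \<Rightarrow> bool" where
  "essentially_irreducible M g Z \<longleftrightarrow>
     (\<exists>A. Z A > 0 \<and> \<not> minus2_curve M g A \<and>
        (let k = Z A; R = (\<lambda>i. Z i - (if i = A then k else 0)) in
          R = (\<lambda>_. 0) \<or> (\<forall>i. R i > 0 \<longrightarrow> minus2_curve M g i)))"

definition canonical_cycle :: "('e::finite \<Rightarrow> 'e \<Rightarrow> int) \<Rightarrow> ('e \<Rightarrow> int) \<Rightarrow> 'e \<Rightarrow> real" where
  "canonical_cycle M g = (THE Zk. \<forall>i. (\<Sum>j\<in>UNIV. Zk j * real_of_int (M j i)) = - real_of_int (KE M g i))"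

end

theory Submission
  imports Defs "HOL-Analysis.Analysis"
begin

definition ue :: "'e \<Rightarrow> 'e cycle" where "ue E = (\<lambda>i. if i = E then 1 else 0)"

lemma inter_interE: "inter M D C = (\<Sum>j\<in>UNIV. C j * interE M D j)"
  unfolding inter_def interE_def
  by (subst sum.swap) (simp add: sum_distrib_left mult.commute mult.left_commute)

lemma interE_add: "interE M (\<lambda>i. D i + C i) j = interE M D j + interE M C j"
  unfolding interE_def by (simp add: algebra_simps sum.distrib)

lemma interE_diff: "interE M (\<lambda>i. D i - C i) j = interE M D j - interE M C j"
  unfolding interE_def by (simp add: algebra_simps sum_subtractf)

lemma sum_ue: "(\<Sum>j\<in>(UNIV::'e::finite set). ue E j * f j) = f E"
proof -
  have "(\<Sum>j\<in>(UNIV::'e set). ue E j * f j) = (\<Sum>j\<in>UNIV. if j = E then f j else 0)"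
    by (rule sum.cong) (auto simp: ue_def)
  also have "\<dots> = f E" by simp
  finally show ?thesis .
qed

lemma interE_ue: "interE M (ue E) j = M E j"
  unfolding interE_def using sum_ue[of E "\<lambda>i. M i j"] by simp

lemma interE_zero: "interE M (\<lambda>i. 0) j = 0"
  unfolding interE_def by simp

lemma interE_sum: "interE M (\<lambda>j. \<Sum>i\<in>I. D i j) E = (\<Sum>i\<in>I. interE M (D i) E)"
  unfolding interE_def by (subst sum.swap) (simp add: sum_distrib_right)

lemma inter_sym:
  assumes "\<forall>i j. M i j = M j i"
  shows "inter M D C = inter M C D"
proof -
  have "inter M D C = (\<Sum>j\<in>UNIV. \<Sum>i\<in>UNIV. D i * M i j * C j)"
    unfolding inter_def by (rule sum.swap)
  also have "\<dots> = inter M C D"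
    unfolding inter_def
  proof (intro sum.cong refl)
    fix j i
    show "D i * M i j * C j = C j * M j i * D i" using assms by simp
  qed
  finally show ?thesis .
qed

lemma inter_add_left: "inter M (\<lambda>i. D i + C i) X = inter M D X + inter M C X"
  unfolding inter_interE by (simp add: interE_add algebra_simps sum.distrib)

lemma inter_diff_left: "inter M (\<lambda>i. D i - C i) X = inter M D X - inter M C X"
  unfolding inter_interE by (simp add: interE_diff algebra_simps sum_subtractf)

lemma inter_add_right: "inter M X (\<lambda>i. D i + C i) = inter M X D + inter M X C"
  unfolding inter_interE by (simp add: algebra_simps sum.distrib)

lemma inter_diff_right: "inter M X (\<lambda>i. D i - C i) = inter M X D - inter M X C"
  unfolding inter_interE by (simp add: algebra_simps sum_subtractf)

lemma inter_ue_right: "inter M X (ue E) = interE M X E"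
  unfolding inter_interE by (rule sum_ue)

lemma inter_ue_ue: "inter M (ue E) (ue E) = M E E"
  by (simp add: inter_ue_right interE_ue)

lemma Kdot_add: "Kdot M g (\<lambda>i. D i + C i) = Kdot M g D + Kdot M g C"
  unfolding Kdot_def by (simp add: algebra_simps sum.distrib)

lemma Kdot_diff: "Kdot M g (\<lambda>i. D i - C i) = Kdot M g D - Kdot M g C"
  unfolding Kdot_def by (simp add: algebra_simps sum_subtractf)

lemma Kdot_ue: "Kdot M g (ue E) = KE M g E"
  unfolding Kdot_def by (rule sum_ue)

lemma interE_mono_at:
  assumes off: "\<forall>i j. i \<noteq> j \<longrightarrow> M i j \<ge> 0"
    and le: "\<forall>i. C i \<le> D i" and eq: "C E = D E"
  shows "interE M C E \<le> interE M D E"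
proof -
  have "interE M D E - interE M C E = (\<Sum>j\<in>UNIV. (D j - C j) * M j E)"
    unfolding interE_def by (simp add: algebra_simps sum_subtractf)
  also have "\<dots> \<ge> 0"
  proof (rule sum_nonneg)
    fix j assume "j \<in> (UNIV::'a set)"
    show "0 \<le> (D j - C j) * M j E"
      using le off eq by (cases "j = E") auto
  qed
  finally show ?thesis by simp
qed

lemma exists_least:
  fixes S :: "('e::finite \<Rightarrow> int) set"
  assumes X0: "X0 \<in> S" and nn: "\<And>X. X \<in> S \<Longrightarrow> \<forall>i. X i \<ge> 0"
    and cl: "\<And>X Y. X \<in> S \<Longrightarrow> Y \<in> S \<Longrightarrow> (\<lambda>i. min (X i) (Y i)) \<in> S"
  shows "\<exists>L\<in>S. \<forall>X\<in>S. L \<le> X"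
proof -
  obtain L where L: "L \<in> S" "\<forall>Y. Y \<in> S \<longrightarrow> nat (\<Sum>i\<in>UNIV. L i) \<le> nat (\<Sum>i\<in>UNIV. Y i)"
    using ex_has_least_nat[of "\<lambda>X. X \<in> S" X0 "\<lambda>X. nat (\<Sum>i\<in>UNIV. X i)"] X0 by auto
  show ?thesis
  proof (intro bexI[OF _ L(1)] ballI)
    fix X assume X: "X \<in> S"
    define mn where "mn = (\<lambda>i. min (L i) (X i))"
    have mnS: "mn \<in> S" using cl L(1) X unfolding mn_def by blast
    have a: "nat (\<Sum>i\<in>UNIV. L i) \<le> nat (\<Sum>i\<in>UNIV. mn i)" using L(2) mnS by blast
    have b: "(\<Sum>i\<in>UNIV. mn i) \<ge> 0" using nn[OF mnS] by (simp add: sum_nonneg)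
    have c: "(\<Sum>i\<in>UNIV. L i) \<ge> 0" using nn[OF L(1)] by (simp add: sum_nonneg)
    have le: "(\<Sum>i\<in>UNIV. L i) \<le> (\<Sum>i\<in>UNIV. mn i)" using a b c by simp
    have d: "\<forall>i. L i - mn i \<ge> 0" unfolding mn_def by simp
    have "(\<Sum>i\<in>UNIV. L i - mn i) \<le> 0" using le by (simp add: sum_subtractf)
    then have "(\<Sum>i\<in>UNIV. L i - mn i) = 0" using d by (simp add: sum_nonneg order_antisym)
    then have "\<forall>i\<in>UNIV. L i - mn i = 0" using d by (subst (asm) sum_nonneg_eq_0_iff) auto
    then have z: "L i - mn i = 0" for i by simp
    show "L \<le> X" unfolding le_fun_def
    proof
      fix i
      have "L i - min (L i) (X i) = 0" using z[of i] unfolding mn_def by simp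
      then show "L i \<le> X i" by (simp add: min_def split: if_splits)
    qed
  qed
qed

lemma exists_greatest:
  fixes S :: "('e::finite \<Rightarrow> int) set"
  assumes X0: "X0 \<in> S" and bd: "\<And>X. X \<in> S \<Longrightarrow> X \<le> B"
    and cl: "\<And>X Y. X \<in> S \<Longrightarrow> Y \<in> S \<Longrightarrow> (\<lambda>i. max (X i) (Y i)) \<in> S"
  shows "\<exists>G\<in>S. \<forall>X\<in>S. X \<le> G"
proof -
  let ?T = "(\<lambda>X i. B i - X i) ` S"
  have "\<exists>L\<in>?T. \<forall>X\<in>?T. L \<le> X"
  proof (rule exists_least)
    show "(\<lambda>i. B i - X0 i) \<in> ?T" using X0 by blast
    show "\<forall>i. X i \<ge> 0" if "X \<in> ?T" for X using that bd by (auto simp: le_fun_def)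
    show "(\<lambda>i. min (X i) (Y i)) \<in> ?T" if "X \<in> ?T" "Y \<in> ?T" for X Y
    proof -
      from that(1) obtain X' where X': "X' \<in> S" "X = (\<lambda>i. B i - X' i)" by auto
      from that(2) obtain Y' where Y': "Y' \<in> S" "Y = (\<lambda>i. B i - Y' i)" by auto
      note XY = X'(1) Y'(1) X'(2) Y'(2)
      have "(\<lambda>i. min (X i) (Y i)) = (\<lambda>i. B i - max (X' i) (Y' i))"
        using XY by (auto simp: fun_eq_iff)
      then show ?thesis
        by (rule image_eqI[where x="\<lambda>i. max (X' i) (Y' i)"]) (rule cl[OF XY(1,2)])
    qed
  qed
  then obtain L where L: "L \<in> ?T" "\<forall>X\<in>?T. L \<le> X" by blast
  then obtain G where G: "G \<in> S" "L = (\<lambda>i. B i - G i)" by blast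
  show ?thesis
  proof (intro bexI[OF _ G(1)] ballI)
    fix X assume "X \<in> S"
    then have "L \<le> (\<lambda>i. B i - X i)" using L(2) by blast
    then show "X \<le> G" using G(2) by (auto simp: le_fun_def)
  qed
qed

lemma pos_intro:
  assumes "\<forall>i. X i \<ge> 0" "X a > 0"
  shows "pos_cycle X"
  unfolding pos_cycle_def
proof (intro conjI)
  show "\<forall>i. 0 \<le> X i" by fact
  show "X \<noteq> (\<lambda>_. 0)"
  proof
    assume "X = (\<lambda>_. 0)"
    then have "X a = 0" by simp
    with assms(2) show False by simp
  qed
qed

lemma inter_sum_left: "inter M (\<lambda>j. \<Sum>i\<in>I. D i j) C = (\<Sum>i\<in>I. inter M (D i) C)"
  unfolding inter_interE interE_sum by (simp add: sum_distrib_left) (rule sum.swap)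

lemma inter_sum_right: "inter M X (\<lambda>j. \<Sum>i\<in>I. C i j) = (\<Sum>i\<in>I. inter M X (C i))"
  unfolding inter_interE by (simp add: sum_distrib_right) (rule sum.swap)

lemma ue_nn: "ue E x \<ge> 0" unfolding ue_def by simp
lemma ue_le1: "ue E x \<le> 1" unfolding ue_def by simp

locale res =
  fixes M :: "'e::finite \<Rightarrow> 'e \<Rightarrow> int" and g :: "'e \<Rightarrow> int"
  assumes rd: "resolution_data M g"
begin

lemma rdc: "(\<forall>i j. M i j = M j i) \<and>
     (\<forall>i j. i \<noteq> j \<longrightarrow> M i j \<ge> 0) \<and>
     (\<forall>x::'e \<Rightarrow> real. x \<noteq> (\<lambda>_. 0) \<longrightarrow>
        (\<Sum>i\<in>UNIV. \<Sum>j\<in>UNIV. x i * real_of_int (M i j) * x j) < 0) \<and>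
     {(i, j). i \<noteq> j \<and> M i j > 0}\<^sup>* = UNIV \<and>
     (\<forall>i. g i \<ge> 0)"
  using rd unfolding resolution_data_def .

lemma symM': "\<forall>i j. M i j = M j i" using conjunct1[OF rdc] .
lemma offM': "\<forall>i j. i \<noteq> j \<longrightarrow> M i j \<ge> 0" using conjunct1[OF conjunct2[OF rdc]] .
lemma negdef_real': "\<forall>x::'e \<Rightarrow> real. x \<noteq> (\<lambda>_. 0) \<longrightarrow>
        (\<Sum>i\<in>UNIV. \<Sum>j\<in>UNIV. x i * real_of_int (M i j) * x j) < 0"
  using conjunct1[OF conjunct2[OF conjunct2[OF rdc]]] .
lemma conn: "{(i, j). i \<noteq> j \<and> M i j > 0}\<^sup>* = UNIV"
  using conjunct1[OF conjunct2[OF conjunct2[OF conjunct2[OF rdc]]]] .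
lemma g_nonneg': "\<forall>i. g i \<ge> 0"
  using conjunct2[OF conjunct2[OF conjunct2[OF conjunct2[OF rdc]]]] .

lemma symM: "M i j = M j i" using symM' by blast
lemma offM: "i \<noteq> j \<Longrightarrow> M i j \<ge> 0" using offM' by blast
lemma negdef_real: "x \<noteq> (\<lambda>_. 0) \<Longrightarrow> (\<Sum>i\<in>UNIV. \<Sum>j\<in>UNIV. x i * real_of_int (M i j) * x j) < 0"
  using negdef_real' by blast
lemma g_nonneg: "g i \<ge> 0" using g_nonneg' by blast

lemma isym: "inter M D C = inter M C D" by (rule inter_sym[OF symM'])

lemma negdef_int:
  assumes "D \<noteq> (\<lambda>_. 0)"
  shows "inter M D D < 0"
proof -
  let ?x = "\<lambda>i. real_of_int (D i)"
  have "?x \<noteq> (\<lambda>_. 0)" using assms by (auto simp: fun_eq_iff)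
  then have "(\<Sum>i\<in>UNIV. \<Sum>j\<in>UNIV. ?x i * real_of_int (M i j) * ?x j) < 0" by (rule negdef_real)
  moreover have "real_of_int (inter M D D) = (\<Sum>i\<in>UNIV. \<Sum>j\<in>UNIV. ?x i * real_of_int (M i j) * ?x j)"
    unfolding inter_def by (simp add: of_int_sum)
  ultimately show ?thesis by simp
qed

lemma inter_self_le: "inter M D D \<le> 0"
  using negdef_int[of D] by (cases "D = (\<lambda>_. 0)") (auto simp: inter_def)

lemma interE_outside: "\<forall>i. D i \<ge> 0 \<Longrightarrow> D E = 0 \<Longrightarrow> interE M D E \<ge> 0"
  using interE_mono_at[OF offM', of "\<lambda>_. 0" D E] by (simp add: interE_zero)

lemma interE_mono: "\<forall>i. C i \<le> D i \<Longrightarrow> C E = D E \<Longrightarrow> interE M C E \<le> interE M D E"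
  by (rule interE_mono_at[OF offM'])

lemma inter_zero_if:
  assumes "\<forall>i. D i \<noteq> 0 \<longrightarrow> interE M D i = 0"
  shows "inter M D D = 0"
  unfolding inter_interE using assms by (intro sum.neutral) auto

lemma inter_nonneg_disj:
  assumes "\<forall>i. D i \<ge> 0" "\<forall>i. C i \<ge> 0" "\<forall>i. D i = 0 \<or> C i = 0"
  shows "inter M D C \<ge> 0"
  unfolding inter_interE
proof (rule sum_nonneg)
  fix j assume "j \<in> (UNIV::'e set)"
  show "0 \<le> C j * interE M D j"
  proof (cases "C j = 0")
    case False
    then have "D j = 0" using assms(3) by blast
    then have "interE M D j \<ge> 0" using interE_outside assms(1) by blast
    then show ?thesis using assms(2) by simp
  qed simp
qed

lemma exists_neg_vector: "\<exists>N::'e \<Rightarrow> int. (\<forall>i. N i > 0) \<and> (\<forall>i. interE M N i < 0)"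
proof -
  define f :: "real^'e \<Rightarrow> real^'e" where "f x = (\<chi> i. \<Sum>j\<in>UNIV. x$j * real_of_int (M j i))" for x
  have lin: "linear f"
    by (rule linearI) (simp_all add: f_def vec_eq_iff sum.distrib algebra_simps sum_distrib_left)
  have zero: "z = 0" if fz: "f z = 0" for z
  proof (rule ccontr)
    assume nz: "z \<noteq> 0"
    let ?zz = "\<lambda>i. z$i"
    have "?zz \<noteq> (\<lambda>_. 0)" using nz by (auto simp: vec_eq_iff fun_eq_iff)
    then have neg: "(\<Sum>i\<in>UNIV. \<Sum>j\<in>UNIV. ?zz i * real_of_int (M i j) * ?zz j) < 0" by (rule negdef_real)
    have "\<And>i. (\<Sum>j\<in>UNIV. z$j * real_of_int (M j i)) = 0" using fz by (simp add: f_def vec_eq_iff)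
    then have "(\<Sum>i\<in>UNIV. ?zz i * (\<Sum>j\<in>UNIV. z$j * real_of_int (M j i))) = 0" by simp
    moreover have "(\<Sum>i\<in>UNIV. ?zz i * (\<Sum>j\<in>UNIV. z$j * real_of_int (M j i)))
        = (\<Sum>i\<in>UNIV. \<Sum>j\<in>UNIV. ?zz i * real_of_int (M i j) * ?zz j)"
    proof (intro sum.cong refl)
      fix i :: 'e
      show "?zz i * (\<Sum>j\<in>UNIV. z$j * real_of_int (M j i)) = (\<Sum>j\<in>UNIV. ?zz i * real_of_int (M i j) * ?zz j)"
        by (simp add: sum_distrib_left symM[of i] algebra_simps)
    qed
    ultimately show False using neg by simp
  qed
  have "inj f"
  proof (rule injI)
    fix x y assume "f x = f y"
    then have "f (x - y) = 0" using linear_diff[OF lin] by simp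
    then show "x = y" using zero[of "x - y"] by simp
  qed
  then have "surj f" using lin linear_inj_imp_surj by blast
  then obtain x where x: "f x = (\<chi> i. -1)" by (metis surjE)
  define xf where "xf i = x$i" for i
  have eqn: "(\<Sum>j\<in>UNIV. xf j * real_of_int (M j i)) = -1" for i
    using x by (simp add: f_def vec_eq_iff xf_def)
  define nn where "nn i = max (- xf i) 0" for i
  define pp where "pp i = max (xf i) 0" for i
  have xpn: "xf i = pp i - nn i" for i unfolding pp_def nn_def by auto
  have nn0: "nn i \<ge> 0" for i unfolding nn_def by simp
  have pp0: "pp i \<ge> 0" for i unfolding pp_def by simp
  have npz: "nn i * pp i = 0" for i unfolding nn_def pp_def by auto
  have nnz: "nn = (\<lambda>_. 0)"
  proof (rule ccontr)
    assume nz: "nn \<noteq> (\<lambda>_. 0)"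
    have S1: "(\<Sum>i\<in>UNIV. nn i * (\<Sum>j\<in>UNIV. xf j * real_of_int (M j i))) = - (\<Sum>i\<in>UNIV. nn i)"
      using eqn by (simp add: sum_negf)
    have S2a: "nn i * (\<Sum>j\<in>UNIV. xf j * real_of_int (M j i))
        = (\<Sum>j\<in>UNIV. nn i * pp j * real_of_int (M j i)) - (\<Sum>j\<in>UNIV. nn i * real_of_int (M i j) * nn j)" for i
      by (simp add: xpn sum_distrib_left sum_subtractf[symmetric] algebra_simps symM[of i])
    have S2: "(\<Sum>i\<in>UNIV. nn i * (\<Sum>j\<in>UNIV. xf j * real_of_int (M j i)))
        = (\<Sum>i\<in>UNIV. \<Sum>j\<in>UNIV. nn i * pp j * real_of_int (M j i))
          - (\<Sum>i\<in>UNIV. \<Sum>j\<in>UNIV. nn i * real_of_int (M i j) * nn j)"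
      by (simp add: S2a sum_subtractf)
    have T1: "(\<Sum>i\<in>UNIV. \<Sum>j\<in>UNIV. nn i * pp j * real_of_int (M j i)) \<ge> 0"
    proof (intro sum_nonneg)
      fix i j :: 'e
      show "0 \<le> nn i * pp j * real_of_int (M j i)"
      proof (cases "i = j")
        case True then show ?thesis using npz[of i] by (metis mult_zero_left order_refl)
      next
        case False then show ?thesis using offM[of j i] nn0 pp0 by simp
      qed
    qed
    have T2: "(\<Sum>i\<in>UNIV. \<Sum>j\<in>UNIV. nn i * real_of_int (M i j) * nn j) < 0"
      using negdef_real[OF nz] .
    have "(\<Sum>i\<in>UNIV. nn i) \<ge> 0" using nn0 by (simp add: sum_nonneg)
    then show False using S1 S2 T1 T2 by linarith
  qed
  have xf0: "xf i \<ge> 0" for i using nnz xpn pp0 by (metis diff_zero)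
  have xfpos: "xf i > 0" for i
  proof (rule ccontr)
    assume "\<not> xf i > 0"
    then have xi: "xf i = 0" using xf0[of i] by simp
    have "(\<Sum>j\<in>UNIV. xf j * real_of_int (M j i)) \<ge> 0"
    proof (rule sum_nonneg)
      fix j :: 'e
      show "0 \<le> xf j * real_of_int (M j i)"
        using xi offM[of j i] xf0[of j] by (cases "j = i") auto
    qed
    then show False using eqn[of i] by simp
  qed
  define t where "t = 1 + (\<Sum>a\<in>UNIV. \<Sum>b\<in>UNIV. \<bar>real_of_int (M a b)\<bar>)"
  have t1: "t \<ge> 1" unfolding t_def by (simp add: sum_nonneg)
  define N where "N j = \<lceil>t * xf j\<rceil>" for j
  have Npos: "N j > 0" for j
  proof -
    have "t * xf j > 0" using t1 xfpos[of j] by simp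
    then show ?thesis unfolding N_def by linarith
  qed
  have Nneg: "interE M N i < 0" for i
  proof -
    have "real_of_int (interE M N i) = (\<Sum>j\<in>UNIV. real_of_int (N j) * real_of_int (M j i))"
      unfolding interE_def by (simp add: of_int_sum)
    also have "\<dots> = (\<Sum>j\<in>UNIV. t * (xf j * real_of_int (M j i)))
        + (\<Sum>j\<in>UNIV. (real_of_int (N j) - t * xf j) * real_of_int (M j i))"
      by (simp add: sum.distrib[symmetric] algebra_simps)
    also have "(\<Sum>j\<in>UNIV. t * (xf j * real_of_int (M j i))) = - t"
      using eqn[of i] by (simp add: sum_distrib_left[symmetric])
    also have "(\<Sum>j\<in>UNIV. (real_of_int (N j) - t * xf j) * real_of_int (M j i))
        \<le> (\<Sum>j\<in>UNIV. \<bar>real_of_int (M j i)\<bar>)"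
    proof (rule sum_mono)
      fix j :: 'e
      have e0: "real_of_int (N j) - t * xf j \<ge> 0" "real_of_int (N j) - t * xf j < 1"
        unfolding N_def by linarith+
      have "(real_of_int (N j) - t * xf j) * real_of_int (M j i)
          \<le> \<bar>(real_of_int (N j) - t * xf j) * real_of_int (M j i)\<bar>" by simp
      also have "\<dots> = (real_of_int (N j) - t * xf j) * \<bar>real_of_int (M j i)\<bar>"
        using e0 by (simp add: abs_mult)
      also have "\<dots> \<le> 1 * \<bar>real_of_int (M j i)\<bar>"
        using e0 by (intro mult_right_mono) auto
      finally show "(real_of_int (N j) - t * xf j) * real_of_int (M j i) \<le> \<bar>real_of_int (M j i)\<bar>"
        by simp
    qed
    also have "(\<Sum>j\<in>UNIV. \<bar>real_of_int (M j i)\<bar>) \<le> (\<Sum>a\<in>UNIV. \<Sum>b\<in>UNIV. \<bar>real_of_int (M a b)\<bar>)"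
    proof (rule sum_mono)
      fix a :: 'e
      show "\<bar>real_of_int (M a i)\<bar> \<le> (\<Sum>b\<in>UNIV. \<bar>real_of_int (M a b)\<bar>)"
        by (rule member_le_sum) auto
    qed
    finally have "real_of_int (interE M N i) \<le> - t + (t - 1)" unfolding t_def by simp
    then show ?thesis by simp
  qed
  show ?thesis using Npos Nneg by blast
qed

lemma fund_pos: "fund_cond M UNIV X \<Longrightarrow> X i > 0"
  unfolding fund_cond_def pos_cycle_def supp_def
  by (metis (mono_tags, lifting) UNIV_I mem_Collect_eq order_le_neq_trans)

lemma pos_all_fund:
  assumes "\<forall>i. D i > 0" "\<forall>i. interE M D i \<le> 0"
  shows "fund_cond M UNIV D"
  unfolding fund_cond_def pos_cycle_def supp_def
proof (intro conjI)
  show "\<forall>i. 0 \<le> D i" using assms(1) less_imp_le by blast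
  show "D \<noteq> (\<lambda>_. 0)"
  proof
    assume "D = (\<lambda>_. 0)"
    then have "D undefined = 0" by simp
    with assms(1) show False by (metis less_irrefl)
  qed
  show "{i. D i \<noteq> 0} = UNIV"
  proof (rule set_eqI)
    fix x show "x \<in> {i. D i \<noteq> 0} \<longleftrightarrow> x \<in> UNIV" using assms(1)[rule_format, of x] by simp
  qed
  show "\<forall>i\<in>UNIV. interE M D i \<le> 0" using assms(2) by simp
qed

lemma fund_min_closed:
  assumes X: "fund_cond M UNIV X" and Y: "fund_cond M UNIV Y"
  shows "fund_cond M UNIV (\<lambda>i. min (X i) (Y i))"
proof -
  have p: "min (X i) (Y i) > 0" for i using fund_pos[OF X] fund_pos[OF Y] by simp
  have n: "interE M (\<lambda>i. min (X i) (Y i)) E \<le> 0" for E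
  proof (cases "X E \<le> Y E")
    case True
    have "interE M (\<lambda>i. min (X i) (Y i)) E \<le> interE M X E"
      by (rule interE_mono) (use True in auto)
    also have "\<dots> \<le> 0" using X unfolding fund_cond_def by blast
    finally show ?thesis .
  next
    case False
    have "interE M (\<lambda>i. min (X i) (Y i)) E \<le> interE M Y E"
      by (rule interE_mono) (use False in auto)
    also have "\<dots> \<le> 0" using Y unfolding fund_cond_def by blast
    finally show ?thesis .
  qed
  show ?thesis using p n by (intro pos_all_fund) auto
qed

lemma fund_exists: "\<exists>Z. fund_cond M UNIV Z \<and> (\<forall>D'. fund_cond M UNIV D' \<longrightarrow> Z \<le> D')"
proof -
  obtain N where N: "\<forall>i. N i > 0" "\<forall>i. interE M N i < 0" using exists_neg_vector by blast
  have "fund_cond M UNIV N" using N by (intro pos_all_fund) (auto simp: less_imp_le)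
  then have "\<exists>L\<in>{D. fund_cond M UNIV D}. \<forall>X\<in>{D. fund_cond M UNIV D}. L \<le> X"
    by (intro exists_least[of N]) (auto intro: fund_min_closed less_imp_le fund_pos)
  then show ?thesis by auto
qed

lemma fund_cycle_prop:
  "fund_cond M UNIV (fund_cycle M) \<and> (\<forall>D'. fund_cond M UNIV D' \<longrightarrow> fund_cycle M \<le> D')"
proof -
  have ex1: "\<exists>!Z. fund_cond M UNIV Z \<and> (\<forall>D'. fund_cond M UNIV D' \<longrightarrow> Z \<le> D')"
    using fund_exists by (auto intro: order_antisym)
  show ?thesis unfolding fund_cycle_def fund_cycle_on_def by (rule theI'[OF ex1])
qed

lemma crossing:
  assumes "P a" "\<not> P b"
  shows "\<exists>x y. x \<noteq> y \<and> M x y > 0 \<and> P x \<and> \<not> P y"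
proof -
  have "(a, b) \<in> {(i, j). i \<noteq> j \<and> M i j > 0}\<^sup>*" using conn by simp
  then show ?thesis using assms(2)
  proof (induction rule: rtrancl_induct)
    case base then show ?case using assms(1) by simp
  next
    case (step y z) then show ?case by (cases "P y") auto
  qed
qed

definition qf :: "'e cycle \<Rightarrow> int" where "qf X = inter M X X + Kdot M g X"

lemma pa_qf: "pa M g X = 1 + real_of_int (qf X) / 2"
  unfolding pa_def qf_def by simp

lemma pa_eq_iff: "pa M g X = pa M g Y \<longleftrightarrow> qf X = qf Y"
  unfolding pa_qf by simp

lemma q_add_ue: "qf (\<lambda>i. X i + ue E i) = qf X + 2 * interE M X E + 2 * g E - 2"
proof -
  have "inter M (\<lambda>i. X i + ue E i) (\<lambda>i. X i + ue E i)
      = inter M X X + 2 * interE M X E + M E E"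
    by (simp add: inter_add_left inter_add_right inter_ue_right inter_ue_ue interE_ue isym[of "ue E" X])
  moreover have "Kdot M g (\<lambda>i. X i + ue E i) = Kdot M g X + KE M g E"
    by (simp add: Kdot_add Kdot_ue)
  ultimately show ?thesis unfolding qf_def KE_def by simp
qed

lemma q_sub_ue: "qf (\<lambda>i. X i - ue E i) = qf X - 2 * interE M X E + 2 * M E E - 2 * g E + 2"
proof -
  have "inter M (\<lambda>i. X i - ue E i) (\<lambda>i. X i - ue E i)
      = inter M X X - 2 * interE M X E + M E E"
    by (simp add: inter_diff_left inter_diff_right inter_ue_right inter_ue_ue interE_ue isym[of "ue E" X])
  moreover have "Kdot M g (\<lambda>i. X i - ue E i) = Kdot M g X - KE M g E"
    by (simp add: Kdot_diff Kdot_ue)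
  ultimately show ?thesis unfolding qf_def KE_def by simp
qed

lemma interE_ge_term:
  assumes "\<forall>i. X i \<ge> 0" "X b = 0" "a \<noteq> b"
  shows "interE M X b \<ge> X a * M a b"
  unfolding interE_def
proof (rule member_le_sum)
  fix x assume "x \<in> UNIV - {a}"
  show "0 \<le> X x * M x b" using assms offM[of x b] by (cases "x = b") auto
qed auto

abbreviation "Zf \<equiv> fund_cycle M"

lemma Z_fund: "fund_cond M UNIV Zf" using fund_cycle_prop by blast
lemma Z_least: "fund_cond M UNIV D \<Longrightarrow> Zf \<le> D" using fund_cycle_prop by blast
lemma Z_pos: "Zf i > 0" using fund_pos[OF Z_fund] .
lemma Z_neg: "interE M Zf i \<le> 0" using Z_fund unfolding fund_cond_def by blast

lemma laufer:
  assumes "pos_cycle X" "X \<le> Zf"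
  shows "qf X \<le> qf Zf"
  using assms
proof (induction "nat (\<Sum>i\<in>UNIV. Zf i - X i)" arbitrary: X rule: less_induct)
  case less
  have X0: "\<forall>i. X i \<ge> 0" and Xnz: "X \<noteq> (\<lambda>_. 0)" using less.prems(1) unfolding pos_cycle_def by auto
  have XZ: "X i \<le> Zf i" for i using less.prems(2) by (simp add: le_fun_def)
  show ?case
  proof (cases "\<exists>E. interE M X E > 0")
    case True
    then obtain E where E: "interE M X E > 0" by blast
    have XE: "X E < Zf E"
    proof (rule ccontr)
      assume "\<not> X E < Zf E"
      then have "X E = Zf E" using XZ[of E] by simp
      then have "interE M X E \<le> interE M Zf E" using XZ by (intro interE_mono) auto
      then show False using E Z_neg[of E] by simp
    qed
    define X' where "X' = (\<lambda>i. X i + ue E i)"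
    have X'0: "\<forall>i. X' i \<ge> 0" using X0 unfolding X'_def ue_def by simp
    have "X' E \<noteq> 0" using X0 unfolding X'_def ue_def by (simp add: add_nonneg_eq_0_iff)
    then have X'pos: "pos_cycle X'" unfolding pos_cycle_def using X'0 by (auto simp: fun_eq_iff)
    have X'Z: "X' \<le> Zf" using XZ XE unfolding X'_def ue_def le_fun_def by auto
    have "(\<Sum>i\<in>UNIV. Zf i - X' i) = (\<Sum>i\<in>UNIV. Zf i - X i) - (\<Sum>i\<in>UNIV. ue E i)"
      unfolding X'_def by (simp add: sum_subtractf[symmetric] algebra_simps)
    also have "(\<Sum>i\<in>UNIV. ue E i) = 1" using sum_ue[of E "\<lambda>_. 1"] by simp
    finally have s: "(\<Sum>i\<in>UNIV. Zf i - X' i) = (\<Sum>i\<in>UNIV. Zf i - X i) - 1" .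
    have "(\<Sum>i\<in>UNIV. Zf i - X' i) \<ge> 0" using X'Z by (intro sum_nonneg) (auto simp: le_fun_def)
    then have "nat (\<Sum>i\<in>UNIV. Zf i - X' i) < nat (\<Sum>i\<in>UNIV. Zf i - X i)" using s by simp
    then have "qf X' \<le> qf Zf" using less.hyps X'pos X'Z by blast
    moreover have "qf X' = qf X + 2 * interE M X E + 2 * g E - 2" unfolding X'_def by (rule q_add_ue)
    ultimately show ?thesis using E g_nonneg[of E] by simp
  next
    case False
    then have neg: "\<forall>E. interE M X E \<le> 0" by (simp add: not_less)
    show ?thesis
    proof (cases "\<forall>i. X i > 0")
      case True
      then have "fund_cond M UNIV X" using neg by (intro pos_all_fund) auto
      then have "Zf \<le> X" by (rule Z_least)
      then have "X = Zf" using less.prems(2) by (rule antisym[rotated])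
      then show ?thesis by simp
    next
      case False
      then obtain b where b: "X b = 0" using X0 by (metis order_le_neq_trans)
      obtain a where a: "X a \<noteq> 0" using Xnz by (auto simp: fun_eq_iff)
      obtain x y where xy: "x \<noteq> y" "M x y > 0" "X x \<noteq> 0" "\<not> X y \<noteq> 0"
        using crossing[of "\<lambda>i. X i \<noteq> 0" a b] a b by blast
      have "interE M X y \<ge> X x * M x y" using X0 xy by (intro interE_ge_term) auto
      moreover have "X x * M x y > 0" using xy X0[rule_format, of x] by simp
      ultimately show ?thesis using neg[rule_format, of y] by simp
    qed
  qed
qed


lemma q_max_min:
  "qf (\<lambda>i. max (X i) (Y i)) + qf (\<lambda>i. min (X i) (Y i))
     = qf X + qf Y + 2 * inter M (\<lambda>i. X i - min (X i) (Y i)) (\<lambda>i. Y i - min (X i) (Y i))"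
proof -
  define a where "a = (\<lambda>i. min (X i) (Y i))"
  define b where "b = (\<lambda>i. X i - min (X i) (Y i))"
  define c where "c = (\<lambda>i. Y i - min (X i) (Y i))"
  have X: "X = (\<lambda>i. a i + b i)" unfolding a_def b_def by auto
  have Y: "Y = (\<lambda>i. a i + c i)" unfolding a_def c_def by auto
  have mx: "(\<lambda>i. max (X i) (Y i)) = (\<lambda>i. (a i + b i) + c i)" unfolding a_def b_def c_def
    by (auto simp: fun_eq_iff max_def min_def)
  have key: "qf (\<lambda>i. (a i + b i) + c i) + qf a = qf (\<lambda>i. a i + b i) + qf (\<lambda>i. a i + c i) + 2 * inter M b c"
    unfolding qf_def
    by (simp add: inter_add_left inter_add_right Kdot_add isym[of b a] isym[of c a] isym[of c b] algebra_simps)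
  have e1: "qf (\<lambda>i. max (X i) (Y i)) = qf (\<lambda>i. (a i + b i) + c i)" using mx by simp
  have e2: "qf (\<lambda>i. min (X i) (Y i)) = qf a" unfolding a_def by simp
  have e3: "qf X = qf (\<lambda>i. a i + b i)" using X by simp
  have e4: "qf Y = qf (\<lambda>i. a i + c i)" using Y by simp
  have e5: "inter M (\<lambda>i. X i - min (X i) (Y i)) (\<lambda>i. Y i - min (X i) (Y i)) = inter M b c"
    unfolding b_def c_def ..
  show ?thesis unfolding e1 e2 e3 e4 e5 using key by simp
qed

end

locale setting = res M g for M :: "'e::finite \<Rightarrow> 'e \<Rightarrow> int" and g :: "'e \<Rightarrow> int" +
  fixes A :: 'e
  assumes minres: "minimal_resolution M g"
    and pfpos: "pf M g > 0"
    and ess: "essentially_irreducible M g (fund_cycle M)"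
    and nm2: "\<not> minus2_curve M g A"
    and hypK: "KE M g A + inter M (fund_cycle M) (fund_cycle M) \<ge> 0"
begin

lemma others: "i \<noteq> A \<Longrightarrow> g i = 0 \<and> M i i = -2"
proof -
  assume iA: "i \<noteq> A"
  obtain A' where A': "Zf A' > 0" "\<not> minus2_curve M g A'"
    "(\<lambda>j. Zf j - (if j = A' then Zf A' else 0)) = (\<lambda>_. 0) \<or>
     (\<forall>j. Zf j - (if j = A' then Zf A' else 0) > 0 \<longrightarrow> minus2_curve M g j)"
    using ess unfolding essentially_irreducible_def Let_def by blast
  have AA: "A' = A"
  proof (rule ccontr)
    assume ne: "A' \<noteq> A"
    from A'(3) show False
    proof
      assume "(\<lambda>j. Zf j - (if j = A' then Zf A' else 0)) = (\<lambda>_. 0)"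
      then have "Zf A - (if A = A' then Zf A' else 0) = 0" by (metis (mono_tags, lifting))
      then show False using ne Z_pos[of A] by simp
    next
      assume "\<forall>j. Zf j - (if j = A' then Zf A' else 0) > 0 \<longrightarrow> minus2_curve M g j"
      then have "minus2_curve M g A" using ne Z_pos[of A] by auto
      then show False using nm2 by simp
    qed
  qed
  from A'(3) show ?thesis
  proof
    assume "(\<lambda>j. Zf j - (if j = A' then Zf A' else 0)) = (\<lambda>_. 0)"
    then have "Zf i - (if i = A' then Zf A' else 0) = 0" by (metis (mono_tags, lifting))
    then show ?thesis using AA iA Z_pos[of i] by simp
  next
    assume "\<forall>j. Zf j - (if j = A' then Zf A' else 0) > 0 \<longrightarrow> minus2_curve M g j"
    then have "minus2_curve M g i" using AA iA Z_pos[of i] by auto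
    then show ?thesis unfolding minus2_curve_def by simp
  qed
qed

lemma KE_other: "i \<noteq> A \<Longrightarrow> KE M g i = 0"
  using others unfolding KE_def by simp

definition kap :: int where "kap = KE M g A"

lemma MAA_neg: "M A A < 0"
proof -
  have "ue A \<noteq> (\<lambda>_. 0)" unfolding ue_def by (auto simp: fun_eq_iff)
  then have "inter M (ue A) (ue A) < 0" by (rule negdef_int)
  then show ?thesis by (simp add: inter_ue_ue)
qed

lemma kap_pos: "kap > 0"
proof (cases "g A = 0")
  case True
  then have "M A A \<noteq> -1" using minres unfolding minimal_resolution_def by blast
  moreover have "M A A \<noteq> -2" using nm2 True unfolding minus2_curve_def by blast
  ultimately have "M A A \<le> -3" using MAA_neg by linarith
  then show ?thesis unfolding kap_def KE_def using True by simp
next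
  case False
  then have "g A \<ge> 1" using g_nonneg[of A] by simp
  then show ?thesis unfolding kap_def KE_def using MAA_neg by simp
qed

lemma Kdot_A: "Kdot M g X = X A * kap"
proof -
  have "Kdot M g X = (\<Sum>i\<in>UNIV. ue A i * (X i * KE M g i))"
    unfolding Kdot_def by (intro sum.cong refl) (auto simp: ue_def KE_other)
  also have "\<dots> = X A * kap" unfolding kap_def by (rule sum_ue)
  finally show ?thesis .
qed

lemma qf_A: "qf X = inter M X X + X A * kap"
  unfolding qf_def Kdot_A ..

definition kk :: int where "kk = Zf A"
definition dd :: int where "dd = - inter M Zf Zf"

lemma kk_pos: "kk > 0" unfolding kk_def by (rule Z_pos)

lemma Zf_nz: "Zf \<noteq> (\<lambda>_. 0)"
  using Z_pos[of undefined] by (metis less_irrefl)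

lemma dd_pos: "dd > 0" unfolding dd_def using negdef_int[OF Zf_nz] by simp

lemma dd_le: "dd \<le> kap" using hypK unfolding dd_def kap_def by simp

lemma qZ: "qf Zf = - dd + kk * kap" unfolding qf_A dd_def kk_def by simp

definition inM :: "'e cycle \<Rightarrow> bool" where
  "inM X \<longleftrightarrow> pos_cycle X \<and> X \<le> Zf \<and> qf X = qf Zf"

lemma pos_Zf: "pos_cycle Zf" using Z_fund unfolding fund_cond_def by blast

lemma inM_Zf: "inM Zf" unfolding inM_def using pos_Zf by simp

lemma pos_nz: "pos_cycle X \<Longrightarrow> X \<noteq> (\<lambda>_. 0)" unfolding pos_cycle_def by blast
lemma pos_nn: "pos_cycle X \<Longrightarrow> X i \<ge> 0" unfolding pos_cycle_def by blast

lemma inM_A: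
  assumes "inM X"
  shows "X A = kk \<and> inter M X X = - dd"
proof -
  have pX: "pos_cycle X" and XZ: "X \<le> Zf" and q: "qf X = qf Zf" using assms unfolding inM_def by auto
  have neg: "inter M X X \<le> -1" using negdef_int[OF pos_nz[OF pX]] by simp
  have le: "X A \<le> kk" using XZ unfolding kk_def le_fun_def by blast
  have eq: "inter M X X + X A * kap = - dd + kk * kap" using q unfolding qf_A[of X] qZ .
  have "X A = kk"
  proof (rule ccontr)
    assume "X A \<noteq> kk"
    then have "kk - X A \<ge> 1" using le by simp
    then have "(kk - X A) * kap \<ge> 1 * kap" using kap_pos by (intro mult_right_mono) auto
    then show False using eq neg dd_le by (simp add: algebra_simps)
  qed
  then show ?thesis using eq by simp
qed

lemma inM_lattice:
  assumes X: "inM X" and Y: "inM Y"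
  shows "inM (\<lambda>i. max (X i) (Y i)) \<and> inM (\<lambda>i. min (X i) (Y i))"
proof -
  have pX: "pos_cycle X" and XZ: "X \<le> Zf" and pY: "pos_cycle Y" and YZ: "Y \<le> Zf"
    and qX: "qf X = qf Zf" and qY: "qf Y = qf Zf" using X Y unfolding inM_def by auto
  have XA: "X A = kk" and YA: "Y A = kk" using inM_A[OF X] inM_A[OF Y] by auto
  let ?mx = "\<lambda>i. max (X i) (Y i)" and ?mn = "\<lambda>i. min (X i) (Y i)"
  have pmn: "pos_cycle ?mn" unfolding pos_cycle_def
  proof
    show "\<forall>i. 0 \<le> min (X i) (Y i)" using pos_nn[OF pX] pos_nn[OF pY] by simp
    show "?mn \<noteq> (\<lambda>_. 0)"
    proof
      assume "?mn = (\<lambda>_. 0)"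
      then have "min (X A) (Y A) = 0" by (metis (mono_tags, lifting))
      then show False using XA YA kk_pos by simp
    qed
  qed
  have pmx: "pos_cycle ?mx" unfolding pos_cycle_def
  proof
    show "\<forall>i. 0 \<le> max (X i) (Y i)" using pos_nn[OF pX] by (simp add: le_max_iff_disj)
    show "?mx \<noteq> (\<lambda>_. 0)"
    proof
      assume "?mx = (\<lambda>_. 0)"
      then have "max (X A) (Y A) = 0" by (metis (mono_tags, lifting))
      then show False using XA YA kk_pos by simp
    qed
  qed
  have mxZ: "?mx \<le> Zf" and mnZ: "?mn \<le> Zf" using XZ YZ by (auto simp: le_fun_def min_le_iff_disj)
  have l1: "qf ?mx \<le> qf Zf" by (rule laufer[OF pmx mxZ])
  have l2: "qf ?mn \<le> qf Zf" by (rule laufer[OF pmn mnZ])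
  have "inter M (\<lambda>i. X i - min (X i) (Y i)) (\<lambda>i. Y i - min (X i) (Y i)) \<ge> 0"
    by (rule inter_nonneg_disj) auto
  then have "qf ?mx + qf ?mn \<ge> 2 * qf Zf" using q_max_min[of X Y] qX qY by simp
  then have "qf ?mx = qf Zf" "qf ?mn = qf Zf" using l1 l2 by auto
  then show ?thesis unfolding inM_def using pmx pmn mxZ mnZ by auto
qed

lemma inM_nonneg: "inM X \<Longrightarrow> \<forall>i. X i \<ge> 0" unfolding inM_def pos_cycle_def by blast

lemma zmin_cond_iff: "zmin_cond M g D \<longleftrightarrow> inM D"
  unfolding zmin_cond_def inM_def pa_eq_iff ..

lemma Zmin_prop: "inM (Zmin M g) \<and> (\<forall>X. inM X \<longrightarrow> Zmin M g \<le> X)"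
proof -
  have "\<exists>L\<in>{X. inM X}. \<forall>X\<in>{X. inM X}. L \<le> X"
    by (rule exists_least[of Zf]) (auto simp: inM_Zf inM_nonneg inM_lattice)
  then obtain L where L: "inM L" "\<forall>X. inM X \<longrightarrow> L \<le> X" by blast
  have "Zmin M g = L" unfolding Zmin_def zmin_cond_iff
  proof (rule the_equality)
    show "inM L \<and> (\<forall>D'. inM D' \<and> D' \<le> L \<longrightarrow> D' = L)" using L by (auto intro: order_antisym)
    show "D = L" if "inM D \<and> (\<forall>D'. inM D' \<and> D' \<le> D \<longrightarrow> D' = D)" for D
      using that L by blast
  qed
  then show ?thesis using L by simp
qed

abbreviation "Zm \<equiv> Zmin M g"

lemma Zm_in: "inM Zm" using Zmin_prop by blast
lemma Zm_least: "inM X \<Longrightarrow> Zm \<le> X" using Zmin_prop by blast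

lemma not_all_orth:
  assumes "inM D"
  shows "\<not> (\<forall>i. D i > 0 \<longrightarrow> interE M D i = 0)"
proof
  assume h: "\<forall>i. D i > 0 \<longrightarrow> interE M D i = 0"
  have "\<forall>i. D i \<noteq> 0 \<longrightarrow> interE M D i = 0" using h inM_nonneg[OF assms] by (metis order_le_neq_trans)
  then have "inter M D D = 0" by (rule inter_zero_if)
  moreover have "inter M D D = - dd" using inM_A[OF assms] by simp
  ultimately show False using dd_pos by simp
qed

lemma tc_inM: "inM D \<Longrightarrow> tyurina_cond M g D X \<Longrightarrow> inM X"
  unfolding tyurina_cond_def inM_def pa_eq_iff by (auto simp: less_fun_def intro: order_trans)

lemma tc_intro:
  assumes D: "inM D" and X: "inM X" and le: "X \<le> D" and orth: "\<forall>i. X i > 0 \<longrightarrow> interE M D i = 0"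
  shows "tyurina_cond M g D X"
proof -
  have ne: "X \<noteq> D" using not_all_orth[OF D] orth by blast
  show ?thesis unfolding tyurina_cond_def pa_eq_iff
    using X D le ne orth unfolding inM_def by (auto simp: less_fun_def dest: antisym)
qed

lemma tyurina_prop:
  assumes D: "inM D" and ZD: "Zm \<le> D" and orth: "\<forall>j. Zm j > 0 \<longrightarrow> interE M D j = 0"
  shows "tyurina_cond M g D (tyurina M g D) \<and> (\<forall>X. tyurina_cond M g D X \<longrightarrow> X \<le> tyurina M g D)"
proof -
  have Zt: "tyurina_cond M g D Zm" by (rule tc_intro[OF D Zm_in ZD orth])
  have "\<exists>G\<in>{X. tyurina_cond M g D X}. \<forall>X\<in>{X. tyurina_cond M g D X}. X \<le> G"
  proof (rule exists_greatest[of Zm _ D])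
    show "Zm \<in> {X. tyurina_cond M g D X}" using Zt by simp
    show "X \<le> D" if "X \<in> {X. tyurina_cond M g D X}" for X
      using that unfolding tyurina_cond_def by (auto simp: less_fun_def)
    show "(\<lambda>i. max (X i) (Y i)) \<in> {X. tyurina_cond M g D X}"
      if "X \<in> {X. tyurina_cond M g D X}" "Y \<in> {X. tyurina_cond M g D X}" for X Y
    proof -
      have tX: "tyurina_cond M g D X" and tY: "tyurina_cond M g D Y" using that by auto
      have "inM (\<lambda>i. max (X i) (Y i))" using inM_lattice tc_inM[OF D tX] tc_inM[OF D tY] by blast
      moreover have "(\<lambda>i. max (X i) (Y i)) \<le> D" using tX tY unfolding tyurina_cond_def
        by (auto simp: less_fun_def le_fun_def)
      moreover have "\<forall>i. max (X i) (Y i) > 0 \<longrightarrow> interE M D i = 0" using tX tY unfolding tyurina_cond_def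
        by (auto simp: less_max_iff_disj)
      ultimately show ?thesis using tc_intro[OF D] by blast
    qed
  qed
  then obtain G where G: "tyurina_cond M g D G" "\<forall>X. tyurina_cond M g D X \<longrightarrow> X \<le> G" by blast
  have "tyurina M g D = G" unfolding tyurina_def
  proof (rule the_equality)
    show "tyurina_cond M g D G \<and> (\<forall>D''. tyurina_cond M g D D'' \<and> G \<le> D'' \<longrightarrow> D'' = G)"
      using G by (auto intro: order_antisym)
    show "X = G" if "tyurina_cond M g D X \<and> (\<forall>D''. tyurina_cond M g D D'' \<and> X \<le> D'' \<longrightarrow> D'' = X)" for X
      using that G by blast
  qed
  then show ?thesis using G by simp
qed


end

locale yau = setting M g A for M :: "'e::finite \<Rightarrow> 'e \<Rightarrow> int" and g :: "'e \<Rightarrow> int" and A :: 'e +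
  fixes m :: nat
  assumes yl: "yau_last M g m"
    and Dm: "yau_seq M g m = Zmin M g"
begin

abbreviation "Ds \<equiv> yau_seq M g"

declare yau_seq.simps(2)[simp del]

lemma cond_all: "i < m \<Longrightarrow> \<forall>j. Zm j > 0 \<longrightarrow> interE M (Ds i) j = 0"
proof (rule ccontr)
  assume im: "i < m" and nc: "\<not> (\<forall>j. Zm j > 0 \<longrightarrow> interE M (Ds i) j = 0)"
  have st: "Ds (i + n) = Ds i" for n
  proof (induction n)
    case 0 then show ?case by simp
  next
    case (Suc n)
    have "\<not> (\<forall>j. Zm j > 0 \<longrightarrow> interE M (Ds (i + n)) j = 0)" using nc Suc.IH by simp
    then have "Ds (Suc (i + n)) = Ds (i + n)" unfolding yau_seq.simps(2) by (rule if_not_P)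
    then show ?case using Suc by simp
  qed
  have "Ds m = Ds i" using st[of "m - i"] im by simp
  moreover have "inter M (Ds m) Zm < 0" and "\<not> inter M (Ds i) Zm < 0"
    using yl im unfolding yau_last_def by auto
  ultimately show False by simp
qed

lemma Ds_suc: "i < m \<Longrightarrow> Ds (Suc i) = tyurina M g (Ds i)"
  using cond_all unfolding yau_seq.simps(2) by simp

lemma Ds_in: "i \<le> m \<Longrightarrow> inM (Ds i) \<and> Zm \<le> Ds i"
proof (induction i)
  case 0 then show ?case using inM_Zf Zm_least[OF inM_Zf] by simp
next
  case (Suc i)
  then have im: "i < m" and IH: "inM (Ds i) \<and> Zm \<le> Ds i" by auto
  have tp: "tyurina_cond M g (Ds i) (tyurina M g (Ds i)) \<and>
      (\<forall>X. tyurina_cond M g (Ds i) X \<longrightarrow> X \<le> tyurina M g (Ds i))"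
    using tyurina_prop IH cond_all[OF im] by blast
  have "inM (Ds (Suc i))" using tc_inM IH tp Ds_suc[OF im] by metis
  moreover have "Zm \<le> Ds (Suc i)"
    using tp tc_intro[OF _ Zm_in _ cond_all[OF im]] IH Ds_suc[OF im] by metis
  ultimately show ?case by blast
qed

lemma Ds_step:
  assumes im: "i < m"
  shows "tyurina_cond M g (Ds i) (Ds (Suc i)) \<and> (\<forall>X. tyurina_cond M g (Ds i) X \<longrightarrow> X \<le> Ds (Suc i))"
proof -
  have IH: "inM (Ds i) \<and> Zm \<le> Ds i" using Ds_in im by simp
  show ?thesis using tyurina_prop IH cond_all[OF im] Ds_suc[OF im] by metis
qed

lemma Ds_inM: "i \<le> m \<Longrightarrow> inM (Ds i)" using Ds_in by blast
lemma Ds_nn: "i \<le> m \<Longrightarrow> Ds i j \<ge> 0" using inM_nonneg[OF Ds_inM] by blast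
lemma Ds_A: "i \<le> m \<Longrightarrow> Ds i A = kk" using inM_A[OF Ds_inM] by blast
lemma Ds_sq: "i \<le> m \<Longrightarrow> inter M (Ds i) (Ds i) = - dd" using inM_A[OF Ds_inM] by blast
lemma Ds_Z: "i \<le> m \<Longrightarrow> Ds i \<le> Zf" using Ds_inM unfolding inM_def by blast

lemma step_tc: "i < m \<Longrightarrow> tyurina_cond M g (Ds i) (Ds (Suc i))"
  using Ds_step by blast

lemma step_le: "i < m \<Longrightarrow> Ds (Suc i) \<le> Ds i"
  using step_tc unfolding tyurina_cond_def less_fun_def by blast

lemma step_orth: "i < m \<Longrightarrow> Ds (Suc i) j > 0 \<Longrightarrow> interE M (Ds i) j = 0"
  using step_tc unfolding tyurina_cond_def by blast

lemma orthA: "i < m \<Longrightarrow> interE M (Ds i) A = 0"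
  using cond_all[of i] inM_A[OF Zm_in] kk_pos by simp

lemma witness:
  assumes im: "i < m" and Y: "inM Y" and le: "Y \<le> Ds i" and orth: "\<forall>j. Y j > 0 \<longrightarrow> interE M (Ds i) j = 0"
  shows "Y \<le> Ds (Suc i)"
  using Ds_step[OF im] tc_intro[OF Ds_inM Y le orth] im by simp

lemma mono_D: "i \<le> l \<Longrightarrow> l \<le> m \<Longrightarrow> Ds l \<le> Ds i"
proof (induction l rule: dec_induct)
  case base then show ?case by simp
next
  case (step l)
  then have "Ds (Suc l) \<le> Ds l" using step_le by simp
  then show ?case using step by (meson Suc_leD order_trans)
qed

lemma C2:
  assumes il: "i < l" and lm: "l \<le> m"
  shows "inter M (Ds i) (Ds l) = 0"
  unfolding inter_interE
proof (rule sum.neutral, rule ballI)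
  fix j :: 'e
  show "Ds l j * interE M (Ds i) j = 0"
  proof (cases "Ds l j > 0")
    case True
    have "Ds l \<le> Ds (Suc i)" using mono_D il lm by simp
    then have "Ds (Suc i) j > 0" using True by (simp add: le_fun_def) (meson less_le_trans)
    then show ?thesis using step_orth il lm by simp
  next
    case False
    then have "Ds l j = 0" using Ds_nn[OF lm, of j] by simp
    then show ?thesis by simp
  qed
qed

lemma inM_intro:
  assumes "\<forall>i. X i \<ge> 0" "X A > 0" "X \<le> Zf" "qf X = qf Zf"
  shows "inM X"
  unfolding inM_def using assms pos_intro[of X A] by auto

lemma C3:
  assumes im: "i \<le> m" and pos: "Ds i E > 0"
  shows "interE M (Ds i) E \<le> 0"
proof (cases i)
  case 0 then show ?thesis using Z_neg by simp
next
  case (Suc i')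
  then have i'm: "i' < m" using im by simp
  let ?X = "Ds (Suc i')" and ?P = "Ds i'"
  have XP: "?X \<le> ?P" using step_le[OF i'm] .
  show ?thesis
  proof (rule ccontr)
    assume "\<not> interE M (Ds i) E \<le> 0"
    then have ge: "interE M ?X E \<ge> 1" using Suc by simp
    have posX: "?X E > 0" using pos Suc by simp
    show False
    proof (cases "?X E < ?P E")
      case True
      define X' where "X' = (\<lambda>j. ?X j + ue E j)"
      have X'P: "X' \<le> ?P" using XP True unfolding X'_def ue_def le_fun_def by auto
      have X'Z: "X' \<le> Zf" using X'P Ds_Z[of i'] i'm by (auto intro: order_trans)
      have "qf X' = qf ?X + 2 * interE M ?X E + 2 * g E - 2" unfolding X'_def by (rule q_add_ue)
      moreover have "qf ?X = qf Zf" using Ds_inM[of "Suc i'"] i'm unfolding inM_def by simp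
      ultimately have "qf X' \<ge> qf Zf" using ge g_nonneg[of E] by simp
      moreover have X'0: "\<forall>j. X' j \<ge> 0" using Ds_nn[of "Suc i'"] i'm unfolding X'_def ue_def by simp
      moreover have "X' A > 0" using Ds_A[of "Suc i'"] i'm kk_pos ue_nn[of E A] unfolding X'_def by simp
      moreover have "pos_cycle X'" using X'0 \<open>X' A > 0\<close> by (rule pos_intro)
      ultimately have "inM X'" using laufer[of X'] X'Z by (intro inM_intro) auto
      moreover have "\<forall>j. X' j > 0 \<longrightarrow> interE M ?P j = 0"
      proof (intro allI impI)
        fix j assume "X' j > 0"
        then have "?X j > 0"
          using posX Ds_nn[of "Suc i'" j] i'm unfolding X'_def ue_def by (cases "j = E") auto
        then show "interE M ?P j = 0" using step_orth[OF i'm] by simp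
      qed
      ultimately have "X' \<le> ?X" using witness[OF i'm _ X'P] by blast
      then show False unfolding X'_def ue_def le_fun_def by (metis less_add_one not_le)
    next
      case False
      then have eq: "?X E = ?P E" using XP by (simp add: le_fun_def) (meson antisym_conv2)
      have "interE M ?X E \<le> interE M ?P E" using XP eq by (intro interE_mono) (auto simp: le_fun_def)
      moreover have "interE M ?P E = 0" using step_orth[OF i'm] posX by simp
      ultimately show False using ge by simp
    qed
  qed
qed

lemma C4:
  assumes im: "i \<le> m" and EA: "E \<noteq> A" and pos: "Ds i E > 0"
  shows "interE M (Ds i) E \<ge> -1"
proof -
  define X' where "X' = (\<lambda>j. Ds i j - ue E j)"
  have X'0: "\<forall>j. X' j \<ge> 0" using Ds_nn[OF im] pos unfolding X'_def ue_def by auto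
  have X'A: "X' A > 0" using Ds_A[OF im] kk_pos EA unfolding X'_def ue_def by simp
  have "pos_cycle X'" using X'0 X'A by (rule pos_intro)
  moreover have "X' \<le> Zf" using Ds_Z[OF im] unfolding X'_def le_fun_def using ue_nn[of E] by (smt (verit))
  ultimately have "qf X' \<le> qf Zf" by (rule laufer)
  moreover have "qf X' = qf (Ds i) - 2 * interE M (Ds i) E + 2 * M E E - 2 * g E + 2"
    unfolding X'_def by (rule q_sub_ue)
  moreover have "qf (Ds i) = qf Zf" using Ds_inM[OF im] unfolding inM_def by simp
  ultimately show ?thesis using others[OF EA] by simp
qed

lemma Za:
  assumes EA: "E \<noteq> A" and pos: "Zm E > 0"
  shows "interE M Zm E \<ge> 0"
proof (rule ccontr)
  assume neg: "\<not> interE M Zm E \<ge> 0"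
  define X' where "X' = (\<lambda>j. Zm j - ue E j)"
  have X'0: "\<forall>j. X' j \<ge> 0" using inM_nonneg[OF Zm_in] pos unfolding X'_def ue_def by auto
  have X'A: "X' A > 0" using inM_A[OF Zm_in] kk_pos EA unfolding X'_def ue_def by simp
  have "Zm \<le> Zf" using Zm_in unfolding inM_def by blast
  then have X'Z: "X' \<le> Zf" unfolding X'_def le_fun_def using ue_nn[of E] by (smt (verit))
  have "pos_cycle X'" using X'0 X'A by (rule pos_intro)
  then have "qf X' \<le> qf Zf" using X'Z by (rule laufer)
  moreover have "qf X' = qf Zm - 2 * interE M Zm E + 2 * M E E - 2 * g E + 2"
    unfolding X'_def by (rule q_sub_ue)
  moreover have "qf Zm = qf Zf" using Zm_in unfolding inM_def by simp
  ultimately have "interE M Zm E = -1" using others[OF EA] neg by simp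
  then have "qf X' = qf Zf" using \<open>qf X' = _\<close> \<open>qf Zm = qf Zf\<close> others[OF EA] by simp
  then have "inM X'" using X'0 X'A X'Z by (intro inM_intro) auto
  then have "Zm \<le> X'" by (rule Zm_least)
  then show False unfolding X'_def ue_def le_fun_def by (metis less_add_one not_le diff_add_cancel)
qed

lemma C5:
  assumes im: "i \<le> m" and EA: "E \<noteq> A" and z: "Ds i E = 0" and le: "(\<lambda>j. Ds i j + ue E j) \<le> Zf"
  shows "interE M (Ds i) E \<le> 1"
proof -
  define X' where "X' = (\<lambda>j. Ds i j + ue E j)"
  have X'0: "\<forall>j. X' j \<ge> 0" using Ds_nn[OF im] unfolding X'_def ue_def by simp
  have X'A: "X' A > 0" using Ds_A[OF im] kk_pos EA unfolding X'_def ue_def by simp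
  have "pos_cycle X'" using X'0 X'A by (rule pos_intro)
  then have "qf X' \<le> qf Zf" using le unfolding X'_def by (rule laufer)
  moreover have "qf X' = qf (Ds i) + 2 * interE M (Ds i) E + 2 * g E - 2"
    unfolding X'_def by (rule q_add_ue)
  moreover have "qf (Ds i) = qf Zf" using Ds_inM[OF im] unfolding inM_def by simp
  ultimately show ?thesis using others[OF EA] by simp
qed


lemma C6a:
  assumes im: "i < m" and EA: "E \<noteq> A" and pos: "Ds i E > 0" and z: "Ds (Suc i) E = 0"
    and o: "interE M (Ds i) E = 0"
  shows "interE M (Ds (Suc i)) E = 0"
proof -
  let ?X = "Ds (Suc i)"
  have sm: "Suc i \<le> m" using im by simp
  have ge: "interE M ?X E \<ge> 0" using interE_outside[of ?X E] Ds_nn[OF sm] z by auto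
  have le1: "(\<lambda>j. ?X j + ue E j) \<le> Ds i" using step_le[OF im] pos z unfolding le_fun_def ue_def by auto
  have XZ: "(\<lambda>j. ?X j + ue E j) \<le> Zf" using le1 Ds_Z[of i] im by (auto intro: order_trans)
  have le: "interE M ?X E \<le> 1" using C5[OF sm EA z XZ] .
  show ?thesis
  proof (rule ccontr)
    assume "interE M ?X E \<noteq> 0"
    then have one: "interE M ?X E = 1" using ge le by simp
    define X' where "X' = (\<lambda>j. ?X j + ue E j)"
    have "qf X' = qf ?X + 2 * interE M ?X E + 2 * g E - 2" unfolding X'_def by (rule q_add_ue)
    moreover have "qf ?X = qf Zf" using Ds_inM[OF sm] unfolding inM_def by simp
    ultimately have q: "qf X' = qf Zf" using one others[OF EA] by simp
    have X'0: "\<forall>j. X' j \<ge> 0" unfolding X'_def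
    proof
      fix j show "0 \<le> ?X j + ue E j" using Ds_nn[OF sm, of j] ue_nn[of E j] by linarith
    qed
    have X'A: "X' A > 0" using Ds_A[OF sm] kk_pos ue_nn[of E A] unfolding X'_def by simp
    have X'Z: "X' \<le> Zf" using XZ unfolding X'_def .
    have "inM X'" using X'0 X'A X'Z q by (rule inM_intro)
    moreover have "\<forall>j. X' j > 0 \<longrightarrow> interE M (Ds i) j = 0"
    proof (intro allI impI)
      fix j assume jp: "X' j > 0"
      show "interE M (Ds i) j = 0"
      proof (cases "j = E")
        case True then show ?thesis using o by simp
      next
        case False then have "?X j > 0" using jp unfolding X'_def ue_def by simp
        then show ?thesis using step_orth[OF im] by simp
      qed
    qed
    moreover have "X' \<le> Ds i" using le1 unfolding X'_def .
    ultimately have "X' \<le> ?X" using witness[OF im] by blast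
    then have "?X E + ue E E \<le> ?X E" unfolding X'_def le_fun_def by blast
    then show False unfolding ue_def by simp
  qed
qed

lemma C6b:
  assumes im: "i < m" and EA: "E \<noteq> A" and pos: "Ds i E > 0" and o: "interE M (Ds i) E = -1"
  shows "interE M (Ds (Suc i)) E = 1"
proof -
  let ?X = "Ds i" and ?Y = "Ds (Suc i)"
  have sm: "Suc i \<le> m" and ilm: "i \<le> m" using im by auto
  define t where "t j = ?X j * interE M ?Y j" for j
  define u where "u j = ?Y j * interE M ?Y j - ?X j * interE M ?X j" for j
  have st: "(\<Sum>j\<in>UNIV. t j) = 0"
  proof -
    have "(\<Sum>j\<in>UNIV. t j) = inter M ?Y ?X" unfolding t_def inter_interE ..
    also have "\<dots> = inter M ?X ?Y" by (rule isym)
    also have "\<dots> = 0" using C2[of i "Suc i"] sm by simp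
    finally show ?thesis .
  qed
  have su: "(\<Sum>j\<in>UNIV. u j) = 0"
  proof -
    have "(\<Sum>j\<in>UNIV. u j) = inter M ?Y ?Y - inter M ?X ?X"
      unfolding u_def inter_interE by (simp add: sum_subtractf)
    then show ?thesis using Ds_sq[OF sm] Ds_sq[OF ilm] by simp
  qed
  have tu: "t j \<le> u j" for j
  proof (cases "?Y j > 0")
    case True
    have "interE M ?X j = 0" using step_orth[OF im True] .
    moreover have "interE M ?Y j \<le> 0" using C3[OF sm True] .
    moreover have "?Y j \<le> ?X j" using step_le[OF im] by (simp add: le_fun_def)
    ultimately show ?thesis unfolding t_def u_def by (simp add: mult_right_mono_neg)
  next
    case False
    then have Y0: "?Y j = 0" using Ds_nn[OF sm, of j] by simp
    show ?thesis
    proof (cases "?X j > 0")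
      case False
      then have "?X j = 0" using Ds_nn[OF ilm, of j] by simp
      then show ?thesis unfolding t_def u_def using Y0 by simp
    next
      case Xp: True
      have jA: "j \<noteq> A" using Y0 Ds_A[OF sm] kk_pos by auto
      have c3: "interE M ?X j \<le> 0" using C3[OF ilm Xp] .
      have c4: "interE M ?X j \<ge> -1" using C4[OF ilm jA Xp] .
      show ?thesis
      proof (cases "interE M ?X j = 0")
        case True
        then have "interE M ?Y j = 0" using C6a[OF im jA Xp Y0] by simp
        then show ?thesis unfolding t_def u_def using Y0 True by simp
      next
        case False
        then have m1: "interE M ?X j = -1" using c3 c4 by simp
        have "(\<lambda>l. ?Y l + ue j l) \<le> ?X" using step_le[OF im] Y0 Xp unfolding le_fun_def ue_def by auto
        then have "(\<lambda>l. ?Y l + ue j l) \<le> Zf" using Ds_Z[OF ilm] by (rule order_trans)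
        then have "interE M ?Y j \<le> 1" using C5[OF sm jA Y0] by blast
        then have "?X j * interE M ?Y j \<le> ?X j * 1" using Xp by (intro mult_left_mono) auto
        then show ?thesis unfolding t_def u_def using Y0 m1 by simp
      qed
    qed
  qed
  have "(\<Sum>j\<in>UNIV. u j - t j) = 0" using st su by (simp add: sum_subtractf)
  then have "\<forall>j\<in>UNIV. u j - t j = 0" using tu by (subst (asm) sum_nonneg_eq_0_iff) auto
  then have eqE: "u E = t E" by simp
  have YE: "?Y E = 0"
  proof (rule ccontr)
    assume "?Y E \<noteq> 0"
    then have "?Y E > 0" using Ds_nn[OF sm, of E] by simp
    then have "interE M ?X E = 0" using step_orth[OF im] by simp
    then show False using o by simp
  qed
  have "?X E * interE M ?Y E = ?X E * 1" using eqE unfolding t_def u_def using YE o by simp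
  then show ?thesis using pos by simp
qed

lemma C7:
  assumes EA: "E \<noteq> A"
  shows "(\<Sum>i\<le>m. interE M (Ds i) E) \<ge> 0"
proof -
  define S where "S = {i. i \<le> m \<and> Ds i E > 0}"
  have finS: "finite S" unfolding S_def by simp
  have "0 \<in> S" unfolding S_def using Z_pos[of E] by simp
  then have neS: "S \<noteq> {}" by blast
  define J where "J = Max S"
  have JS: "J \<in> S" unfolding J_def using Max_in finS neS by blast
  then have Jm: "J \<le> m" and JE: "Ds J E > 0" unfolding S_def by auto
  have after: "Ds i E = 0" if "J < i" "i \<le> m" for i
  proof (rule ccontr)
    assume "Ds i E \<noteq> 0"
    then have "i \<in> S" unfolding S_def using Ds_nn[OF that(2), of E] that(2) by simp
    then have "i \<le> J" unfolding J_def using finS by simp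
    then show False using that(1) by simp
  qed
  define f where "f i = interE M (Ds i) E" for i
  have before: "f i = 0" if "i < J" for i
  proof -
    have "Ds J \<le> Ds (Suc i)" using mono_D[of "Suc i" J] that Jm by simp
    then have "Ds (Suc i) E > 0" using JE unfolding le_fun_def by (meson less_le_trans)
    then show ?thesis unfolding f_def using step_orth[of i E] that Jm by simp
  qed
  have fafter: "f i \<ge> 0" if "J < i" "i \<le> m" for i
    unfolding f_def using interE_outside[of "Ds i" E] Ds_nn[OF that(2)] after[OF that] by blast
  have fJ: "f J \<ge> -1" unfolding f_def using C4[OF Jm EA JE] .
  show ?thesis
  proof (cases "f J \<ge> 0")
    case True
    have "\<forall>i\<in>{..m}. f i \<ge> 0"
    proof
      fix i assume "i \<in> {..m}"
      then have im: "i \<le> m" by simp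
      show "f i \<ge> 0"
      proof (cases "i < J")
        case True then show ?thesis using before by simp
      next
        case False
        show ?thesis
        proof (cases "i = J")
          case True then show ?thesis using \<open>f J \<ge> 0\<close> by simp
        next
          case False then show ?thesis using fafter \<open>\<not> i < J\<close> im by simp
        qed
      qed
    qed
    then show ?thesis unfolding f_def by (intro sum_nonneg) blast
  next
    case False
    then have fJm1: "f J = -1" using fJ by simp
    have Jlm: "J < m"
    proof (rule ccontr)
      assume "\<not> J < m"
      then have "J = m" using Jm by simp
      then have "Ds J = Zm" using Dm by simp
      then have "f J \<ge> 0" unfolding f_def using Za[OF EA] JE by simp
      then show False using fJm1 by simp
    qed
    have fS: "f (Suc J) = 1" unfolding f_def using C6b[OF Jlm EA JE] fJm1 unfolding f_def by simp
    define h where "h i = (if i = Suc J then 1 else 0) - (if i = J then 1 else (0::int))" for i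
    have hf: "h i \<le> f i" if "i \<in> {..m}" for i
    proof -
      have im: "i \<le> m" using that by simp
      consider "i < J" | "i = J" | "i = Suc J" | "Suc J < i" by linarith
      then show ?thesis
      proof cases
        case 1 then show ?thesis unfolding h_def using before by simp
      next
        case 2 then show ?thesis unfolding h_def using fJm1 by simp
      next
        case 3 then show ?thesis unfolding h_def using fS by simp
      next
        case 4 then show ?thesis unfolding h_def using fafter[of i] im by simp
      qed
    qed
    have "(\<Sum>i\<le>m. h i) = (\<Sum>i\<le>m. (if i = Suc J then 1 else 0)) - (\<Sum>i\<le>m. (if i = J then 1 else (0::int)))"
      unfolding h_def by (simp add: sum_subtractf)
    also have "\<dots> = 0" using Jlm Jm by simp
    finally have "(\<Sum>i\<le>m. h i) = 0" .
    moreover have "(\<Sum>i\<le>m. h i) \<le> (\<Sum>i\<le>m. f i)" using hf by (rule sum_mono)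
    ultimately show ?thesis unfolding f_def by simp
  qed
qed


abbreviation "Yc \<equiv> yau_cycle M g m"

lemma yE: "interE M Yc E = (\<Sum>i\<le>m. interE M (Ds i) E)"
  unfolding yau_cycle_def by (rule interE_sum)

lemma inner_sum: "i \<le> m \<Longrightarrow> (\<Sum>l\<le>m. inter M (Ds i) (Ds l)) = - dd"
proof -
  assume im: "i \<le> m"
  have "(\<Sum>l\<le>m. inter M (Ds i) (Ds l)) = (\<Sum>l\<le>m. if l = i then - dd else 0)"
  proof (rule sum.cong[OF refl])
    fix l assume "l \<in> {..m}"
    then have lm: "l \<le> m" by simp
    consider "l = i" | "i < l" | "l < i" by linarith
    then show "inter M (Ds i) (Ds l) = (if l = i then - dd else 0)"
    proof cases
      case 1 then show ?thesis using Ds_sq[OF im] by simp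
    next
      case 2 then show ?thesis using C2[OF 2 lm] by simp
    next
      case 3 then show ?thesis using C2[OF 3 im] isym[of "Ds i" "Ds l"] by simp
    qed
  qed
  also have "\<dots> = - dd" using im by simp
  finally show ?thesis .
qed

lemma YY: "inter M Yc Yc = - (int (Suc m) * dd)"
proof -
  have "inter M Yc Yc = (\<Sum>i\<le>m. \<Sum>l\<le>m. inter M (Ds i) (Ds l))"
    unfolding yau_cycle_def inter_sum_left inter_sum_right ..
  also have "\<dots> = (\<Sum>i\<le>m. - dd)" using inner_sum by (intro sum.cong) auto
  also have "\<dots> = - (int (Suc m) * dd)" by simp
  finally show ?thesis .
qed

lemma YcA: "Yc A = int (Suc m) * kk"
proof -
  have "Yc A = (\<Sum>i\<le>m. kk)" unfolding yau_cycle_def using Ds_A by (intro sum.cong) auto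
  then show ?thesis by simp
qed

lemma yA: "interE M Yc A = interE M Zm A"
proof -
  have "interE M Yc A = (\<Sum>i\<le>m. if i = m then interE M Zm A else 0)"
    unfolding yE
  proof (rule sum.cong[OF refl])
    fix i assume "i \<in> {..m}"
    then show "interE M (Ds i) A = (if i = m then interE M Zm A else 0)"
      using orthA[of i] Dm by (cases "i = m") auto
  qed
  then show ?thesis by simp
qed

lemma Zm_sq: "kk * interE M Zm A = - dd"
proof -
  have "inter M Zm Zm = (\<Sum>j\<in>UNIV. if j = A then kk * interE M Zm A else 0)"
    unfolding inter_interE
  proof (rule sum.cong[OF refl])
    fix j :: 'e
    show "Zm j * interE M Zm j = (if j = A then kk * interE M Zm A else 0)"
    proof (cases "j = A")
      case True then show ?thesis using inM_A[OF Zm_in] by simp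
    next
      case False
      show ?thesis
      proof (cases "Zm j > 0")
        case True
        have "interE M Zm j \<le> 0" using C3[of m j] Dm True by simp
        moreover have "interE M Zm j \<ge> 0" using Za[OF False True] .
        ultimately show ?thesis using False by simp
      next
        case nz: False
        then have "Zm j = 0" using inM_nonneg[OF Zm_in] by (metis order_le_neq_trans)
        then show ?thesis using False by simp
      qed
    qed
  qed
  also have "\<dots> = kk * interE M Zm A" by simp
  finally show ?thesis using inM_A[OF Zm_in] by simp
qed

lemma Yc_nn: "Yc j \<ge> 0"
  unfolding yau_cycle_def using Ds_nn by (intro sum_nonneg) auto

lemma Yc_pos: "Yc j > 0"
proof -
  have "Ds 0 j \<le> Yc j" unfolding yau_cycle_def
    by (rule member_le_sum) (auto intro: Ds_nn)
  then show ?thesis using Z_pos[of j] by simp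
qed

lemma y_zero:
  assumes EA: "E \<noteq> A"
  shows "interE M Yc E = 0"
proof -
  define w where "w j = (if j = A then 0 else Yc j * interE M Yc j)" for j
  have "inter M Yc Yc = (\<Sum>j\<in>UNIV. ue A j * (Yc A * interE M Yc A) + w j)"
    unfolding inter_interE w_def by (intro sum.cong) (auto simp: ue_def)
  also have "\<dots> = Yc A * interE M Yc A + (\<Sum>j\<in>UNIV. w j)"
    by (simp add: sum.distrib sum_ue)
  finally have "(\<Sum>j\<in>UNIV. w j) = inter M Yc Yc - Yc A * interE M Yc A" by simp
  also have "\<dots> = 0"
  proof -
    have "Yc A * interE M Yc A = int (Suc m) * (kk * interE M Zm A)" unfolding YcA yA by simp
    then show ?thesis unfolding YY Zm_sq by simp
  qed
  finally have sw: "(\<Sum>j\<in>UNIV. w j) = 0" .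
  have wn: "w j \<ge> 0" for j
    unfolding w_def using Yc_nn[of j] C7[of j] yE[of j] by auto
  have "\<forall>j\<in>UNIV. w j = 0" using sw wn by (subst (asm) sum_nonneg_eq_0_iff) auto
  then have "Yc E * interE M Yc E = 0" unfolding w_def using EA by (metis UNIV_I)
  then show ?thesis using Yc_pos[of E] by simp
qed

lemma canon:
  "canonical_cycle M g =
     (\<lambda>i. ((2 - 2 * pf M g) / real_of_int (inter M Zf Zf) + 1) * real_of_int (yau_cycle M g m i))"
proof -
  define c where "c = (2 - 2 * pf M g) / real_of_int (inter M Zf Zf) + 1"
  have pfv: "pf M g = 1 + real_of_int (- dd + kk * kap) / 2"
    unfolding pf_def pa_qf qZ ..
  have ddp: "real_of_int dd > 0" using dd_pos by simp
  have cv: "c = real_of_int kk * real_of_int kap / real_of_int dd"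
    unfolding c_def pfv dd_def[symmetric]
  proof -
    have "inter M Zf Zf = - dd" unfolding dd_def by simp
    then show "(2 - 2 * (1 + real_of_int (- dd + kk * kap) / 2)) / real_of_int (inter M Zf Zf) + 1 =
        real_of_int kk * real_of_int kap / real_of_int dd"
      using ddp by (simp add: field_simps)
  qed
  define cand where "cand = (\<lambda>i. c * real_of_int (Yc i))"
  let ?P = "\<lambda>Zk::'e \<Rightarrow> real. \<forall>i. (\<Sum>j\<in>UNIV. Zk j * real_of_int (M j i)) = - real_of_int (KE M g i)"
  have sumc: "(\<Sum>j\<in>UNIV. cand j * real_of_int (M j i)) = c * real_of_int (interE M Yc i)" for i
    unfolding cand_def interE_def by (simp add: of_int_sum sum_distrib_left mult.assoc)
  have Pc: "?P cand"
  proof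
    fix i
    show "(\<Sum>j\<in>UNIV. cand j * real_of_int (M j i)) = - real_of_int (KE M g i)"
    proof (cases "i = A")
      case False
      then show ?thesis unfolding sumc using y_zero[OF False] KE_other[OF False] by simp
    next
      case True
      have e: "real_of_int kk * real_of_int (interE M Zm A) = - real_of_int dd"
        using Zm_sq by (metis of_int_minus of_int_mult)
      have "c * real_of_int (interE M Yc A) = real_of_int kap * (real_of_int kk * real_of_int (interE M Zm A)) / real_of_int dd"
        unfolding cv yA by simp
      also have "\<dots> = - real_of_int kap" unfolding e using ddp by simp
      finally show ?thesis unfolding sumc True kap_def by simp
    qed
  qed
  have uniq: "Zk = cand" if PZ: "?P Zk" for Zk
  proof (rule ccontr)
    assume ne: "Zk \<noteq> cand"
    define z where "z j = Zk j - cand j" for j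
    have znz: "z \<noteq> (\<lambda>_. 0)" using ne unfolding z_def by (auto simp: fun_eq_iff)
    have z0: "(\<Sum>j\<in>UNIV. z j * real_of_int (M j i)) = 0" for i
      using PZ Pc unfolding z_def by (simp add: algebra_simps sum_subtractf)
    have "(\<Sum>i\<in>UNIV. \<Sum>j\<in>UNIV. z i * real_of_int (M i j) * z j)
        = (\<Sum>i\<in>UNIV. z i * (\<Sum>j\<in>UNIV. z j * real_of_int (M j i)))"
    proof (intro sum.cong refl)
      fix i :: 'e
      show "(\<Sum>j\<in>UNIV. z i * real_of_int (M i j) * z j) = z i * (\<Sum>j\<in>UNIV. z j * real_of_int (M j i))"
        by (simp add: sum_distrib_left symM[of i] algebra_simps)
    qed
    also have "\<dots> = 0" using z0 by simp
    finally show False using negdef_real[OF znz] by simp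
  qed
  have "canonical_cycle M g = cand" unfolding canonical_cycle_def
    by (rule the_equality[of ?P cand, OF Pc uniq])
  then show ?thesis unfolding cand_def c_def .
qed

end

theorem proposition3p6:
  fixes M :: "'e::finite \<Rightarrow> 'e \<Rightarrow> int" and g :: "'e \<Rightarrow> int" and A :: 'e and m :: nat
  assumes "resolution_data M g"
    and "minimal_resolution M g"
    and "pf M g > 0"
    and "essentially_irreducible M g (fund_cycle M)"
    and "fund_cycle M A > 0" and "\<not> minus2_curve M g A"
    and "KE M g A + inter M (fund_cycle M) (fund_cycle M) \<ge> 0"
    and "yau_last M g m"
    and "yau_seq M g m = Zmin M g"
  shows "canonical_cycle M g =
     (\<lambda>i. ((2 - 2 * pf M g) / real_of_int (inter M (fund_cycle M) (fund_cycle M)) + 1)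
          * real_of_int (yau_cycle M g m i))"
proof -
  interpret yau M g A m
    apply unfold_locales
    using assms by auto
  show ?thesis by (rule canon)
qed

end
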